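(* For $j\in\mathbb{Z}$ let $R_j(t,u)$ be the generating function of labelled plane trees, where $t$ counts edges and $u$ counts nodes with label at least $j$. The family $R_0,R_1,R_2,\dots$ is completely determined by the equations $$R_j=1+tR_j(R_{j-1}+R_{j+1})\quad(j\ge1),\qquad R_0(t,u)=uR_1(tu,1/u).$$ More generally, for all $j\in\mathbb{Z}$, $R_{-j}(t,u)=uR_{j+1}(tu,1/u)$.
   Context: A labelled plane tree is a rooted plane tree whose nodes carry integer labels, with the root labelled $0$ and labels of adjacent nodes differing by $+1$ or $-1$. Generating functions are formal power series in $t$ with coefficients polynomial in $u$. *)

theory Defs
  imports "HOL-Computational_Algebra.Polynomial" "HOL-Computational_Algebra.Formal_Power_Series"
begin

datatype ltree = Node int "ltree list"

fun root_label :: "ltree \<Rightarrow> int" where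
  "root_label (Node a ts) = a"

fun labels :: "ltree \<Rightarrow> int list" where
  "labels (Node a ts) = a # concat (map labels ts)"

fun adj_ok :: "ltree \<Rightarrow> bool" where
  "adj_ok (Node a ts) = (\<forall>t\<in>set ts. \<bar>root_label t - a\<bar> = 1 \<and> adj_ok t)"

definition lpt :: "ltree \<Rightarrow> bool" where
  "lpt T \<longleftrightarrow> root_label T = 0 \<and> adj_ok T"

definition num_edges :: "ltree \<Rightarrow> nat" where
  "num_edges T = length (labels T) - 1"

definition num_ge :: "int \<Rightarrow> ltree \<Rightarrow> nat" where
  "num_ge j T = length (filter (\<lambda>l. j \<le> l) (labels T))"

text \<open>R j (t,u): t counts edges, u counts nodes with label at least j;
  a formal power series in t with coefficients in Z[u].\<close>
definition R :: "int \<Rightarrow> int poly fps" where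
  "R j = Abs_fps (\<lambda>n. \<Sum>T\<in>{T. lpt T \<and> num_edges T = n}. monom 1 (num_ge j T))"

text \<open>dual_rel G F expresses the identity G(t,u) = u * F(t u, 1/u).
  Writing F = sum_n F_n(u) t^n, one has u F(tu,1/u) = sum_n u^(n+1) F_n(1/u) t^n,
  a Laurent polynomial in u for each n; it equals the polynomial G_n iff
  deg F_n <= n+1 and coeff G_n k = coeff F_n (n+1-k) for k <= n+1 (and 0 otherwise).\<close>
definition dual_rel :: "int poly fps \<Rightarrow> int poly fps \<Rightarrow> bool" where
  "dual_rel G F \<longleftrightarrow>
     (\<forall>n. degree (fps_nth F n) \<le> n + 1) \<and>
     (\<forall>n k. coeff (fps_nth G n) k = (if k \<le> n + 1 then coeff (fps_nth F n) (n + 1 - k) else 0))"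

end

theory Submission
  imports Defs
begin

fun shift :: "int \<Rightarrow> ltree \<Rightarrow> ltree" where
  "shift d (Node a ts) = Node (a + d) (map (shift d) ts)"

fun neg :: "ltree \<Rightarrow> ltree" where
  "neg (Node a ts) = Node (-a) (map neg ts)"

fun children :: "ltree \<Rightarrow> ltree list" where
  "children (Node a ts) = ts"

lemma labels_shift: "labels (shift d T) = map (\<lambda>l. l + d) (labels T)"
  by (induction T) (auto simp: map_concat comp_def cong: map_cong)

lemma root_shift[simp]: "root_label (shift d T) = root_label T + d"
  by (cases T) simp

lemma adj_shift[simp]: "adj_ok (shift d T) = adj_ok T"
  by (induction T) auto

lemma shift_shift[simp]: "shift a (shift b T) = shift (b + a) T"
  by (induction T) (auto simp: algebra_simps)

lemma shift_0[simp]: "shift 0 T = T"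
  by (induction T) (auto simp: map_idI)

lemma num_ge_shift: "num_ge j (shift d T) = num_ge (j - d) T"
proof -
  have "(\<lambda>l. j \<le> l + d) = (\<lambda>l. j - d \<le> l)" by auto
  then show ?thesis by (simp add: num_ge_def labels_shift filter_map comp_def)
qed

lemma labels_neg: "labels (neg T) = map uminus (labels T)"
  by (induction T) (auto simp: map_concat comp_def cong: map_cong)

lemma root_neg[simp]: "root_label (neg T) = - root_label T"
  by (cases T) simp

lemma adj_neg[simp]: "adj_ok (neg T) = adj_ok T"
  by (induction T) auto

lemma neg_neg[simp]: "neg (neg T) = T"
  by (induction T) (auto simp: map_idI)

lemma len_labels_pos: "length (labels T) \<ge> 1"
  by (cases T) simp

lemma labels_ne[simp]: "labels T \<noteq> []"
  by (cases T) simp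

lemma len_ts: "length ts \<le> length (concat (map labels ts))"
proof (induction ts)
  case (Cons t ts) then show ?case using len_labels_pos[of t] by simp
qed simp

lemma len_mem: "t \<in> set ts \<Longrightarrow> length (labels t) \<le> length (concat (map labels ts))"
  by (induction ts) auto

lemma fin_trees: "finite {T. adj_ok T \<and> \<bar>root_label T\<bar> \<le> c \<and> length (labels T) \<le> N}"
proof (induction N arbitrary: c)
  case 0
  have "{T. adj_ok T \<and> \<bar>root_label T\<bar> \<le> c \<and> length (labels T) \<le> 0} = {}"
    using len_labels_pos by (auto simp del: labels.simps)
  then show ?case by (metis finite.emptyI)
next
  case (Suc N)
  define M where "M = {T. adj_ok T \<and> \<bar>root_label T\<bar> \<le> c + 1 \<and> length (labels T) \<le> N}"
  have fM: "finite M" unfolding M_def by (rule Suc.IH)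
  define L where "L = {xs. set xs \<subseteq> M \<and> length xs \<le> N}"
  have fL: "finite L" unfolding L_def using fM by (rule finite_lists_length_le)
  have "{T. adj_ok T \<and> \<bar>root_label T\<bar> \<le> c \<and> length (labels T) \<le> Suc N}
        \<subseteq> (\<lambda>(a, ts). Node a ts) ` ({-c..c} \<times> L)"
  proof
    fix T assume T: "T \<in> {T. adj_ok T \<and> \<bar>root_label T\<bar> \<le> c \<and> length (labels T) \<le> Suc N}"
    obtain a ts where Tn: "T = Node a ts" by (cases T)
    have "set ts \<subseteq> M"
    proof
      fix t assume t: "t \<in> set ts"
      have "\<bar>root_label t - a\<bar> = 1" "adj_ok t" using T t Tn by auto
      moreover have "length (labels t) \<le> N" using len_mem[OF t] T Tn by auto
      ultimately show "t \<in> M" unfolding M_def using T Tn by auto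
    qed
    moreover have "length ts \<le> N" using len_ts[of ts] T Tn by auto
    ultimately have "ts \<in> L" unfolding L_def by auto
    moreover have "a \<in> {-c..c}" using T Tn by auto
    ultimately show "T \<in> (\<lambda>(a, ts). Node a ts) ` ({-c..c} \<times> L)" using Tn by force
  qed
  moreover have "finite ((\<lambda>(a, ts). Node a ts) ` ({-c..c} \<times> L))" using fL by auto
  ultimately show ?case by (rule finite_subset)
qed

definition Tn :: "nat \<Rightarrow> ltree set" where
  "Tn n = {T. lpt T \<and> num_edges T = n}"

lemma fin_Tn: "finite (Tn n)"
proof -
  have "Tn n \<subseteq> {T. adj_ok T \<and> \<bar>root_label T\<bar> \<le> 0 \<and> length (labels T) \<le> n + 1}"
    unfolding Tn_def lpt_def num_edges_def by auto
  then show ?thesis using fin_trees finite_subset by blast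
qed

lemma R_nth: "fps_nth (R j) n = (\<Sum>T\<in>Tn n. monom 1 (num_ge j T))"
  by (simp add: R_def Tn_def)

lemma coeff_R: "coeff (fps_nth (R j) n) k = int (card {T\<in>Tn n. num_ge j T = k})"
proof -
  have "coeff (fps_nth (R j) n) k = (\<Sum>T\<in>Tn n. if num_ge j T = k then 1 else 0)"
    by (simp add: R_nth coeff_sum coeff_monom)
  also have "\<dots> = (\<Sum>T\<in>{T\<in>Tn n. num_ge j T = k}. 1)"
    by (rule sum.inter_filter[OF fin_Tn, symmetric])
  finally show ?thesis by simp
qed

lemma num_ge_le: "num_ge j T \<le> num_edges T + 1"
proof -
  have "num_ge j T \<le> length (labels T)" by (simp add: num_ge_def)
  moreover have "num_edges T + 1 = length (labels T)"
    using len_labels_pos[of T] by (simp add: num_edges_def)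
  ultimately show ?thesis by simp
qed

lemma num_ge_Tn: "T \<in> Tn n \<Longrightarrow> num_ge j T \<le> n + 1"
  using num_ge_le[of j T] by (simp add: Tn_def)

lemma num_ge_neg: "num_ge (-j) T + num_ge (j+1) (neg T) = num_edges T + 1"
proof -
  have "(\<lambda>l. j + 1 \<le> l) \<circ> uminus = (\<lambda>l. \<not> (- j \<le> l))" by auto
  then have "num_ge (j+1) (neg T) = length (filter (\<lambda>l. \<not> (- j \<le> l)) (labels T))"
    by (simp add: num_ge_def labels_neg filter_map)
  then show ?thesis unfolding num_ge_def num_edges_def
    using sum_length_filter_compl[of "\<lambda>l. - j \<le> l" "labels T"] len_labels_pos[of T] by simp
qed

lemma Tn_neg: "neg T \<in> Tn n \<longleftrightarrow> T \<in> Tn n"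
  by (simp add: Tn_def lpt_def num_edges_def labels_neg)

lemma dual_R: "dual_rel (R (-j)) (R (j+1))"
  unfolding dual_rel_def
proof (intro conjI allI)
  fix n
  show "degree (fps_nth (R (j+1)) n) \<le> n + 1"
  proof (rule degree_le, intro allI impI)
    fix i assume i: "n + 1 < i"
    have E: "{T\<in>Tn n. num_ge (j+1) T = i} = {}"
      using num_ge_Tn[of _ n "j+1"] i by fastforce
    show "coeff (fps_nth (R (j+1)) n) i = 0" unfolding coeff_R E by simp
  qed
next
  fix n k
  show "coeff (fps_nth (R (-j)) n) k
        = (if k \<le> n + 1 then coeff (fps_nth (R (j+1)) n) (n + 1 - k) else 0)"
  proof (cases "k \<le> n + 1")
    case True
    have "bij_betw neg {T\<in>Tn n. num_ge (-j) T = k} {T\<in>Tn n. num_ge (j+1) T = n + 1 - k}"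
    proof (rule bij_betw_byWitness[where f'=neg])
      show "neg ` {T \<in> Tn n. num_ge (- j) T = k} \<subseteq> {T \<in> Tn n. num_ge (j + 1) T = n + 1 - k}"
      proof
        fix x assume "x \<in> neg ` {T \<in> Tn n. num_ge (- j) T = k}"
        then obtain T where T: "T \<in> Tn n" "num_ge (-j) T = k" "x = neg T" by auto
        have "num_edges T = n" using T by (simp add: Tn_def)
        then show "x \<in> {T \<in> Tn n. num_ge (j + 1) T = n + 1 - k}"
          using T num_ge_neg[of j T] Tn_neg by auto
      qed
      show "neg ` {T \<in> Tn n. num_ge (j + 1) T = n + 1 - k} \<subseteq> {T \<in> Tn n. num_ge (- j) T = k}"
      proof
        fix x assume "x \<in> neg ` {T \<in> Tn n. num_ge (j + 1) T = n + 1 - k}"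
        then obtain T where T: "T \<in> Tn n" "num_ge (j+1) T = n + 1 - k" "x = neg T" by auto
        have "num_edges T = n" using T by (simp add: Tn_def)
        then show "x \<in> {T \<in> Tn n. num_ge (- j) T = k}"
          using T num_ge_neg[of j "neg T"] Tn_neg True by (auto simp: Tn_def num_edges_def labels_neg)
      qed
    qed auto
    then have "card {T\<in>Tn n. num_ge (-j) T = k} = card {T\<in>Tn n. num_ge (j+1) T = n + 1 - k}"
      by (rule bij_betw_same_card)
    then show ?thesis using True by (simp add: coeff_R)
  next
    case False
    have E: "{T\<in>Tn n. num_ge (-j) T = k} = {}"
      using num_ge_Tn[of _ n "-j"] False by fastforce
    show ?thesis using False unfolding coeff_R E by simp
  qed
qed


lemma num_edges_cons: "num_edges (Node a (t#ts)) = Suc (num_edges t + num_edges (Node b ts))"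
  using len_labels_pos[of t] by (simp add: num_edges_def)

lemma num_ge_cons: "num_ge j (Node 0 (t#ts)) = num_ge j t + num_ge j (Node 0 ts)"
  by (simp add: num_ge_def)

lemma lpt_node: "lpt T \<Longrightarrow> T = Node 0 (children T)"
  by (cases T) (simp add: lpt_def)

lemma Tn0: "Tn 0 = {Node 0 []}"
proof
  show "Tn 0 \<subseteq> {Node 0 []}"
  proof
    fix T assume T: "T \<in> Tn 0"
    obtain a ts where Tt: "T = Node a ts" by (cases T)
    have "length ts \<le> 0" using len_ts[of ts] T Tt by (simp add: Tn_def num_edges_def)
    then show "T \<in> {Node 0 []}" using T Tt by (simp add: Tn_def lpt_def)
  qed
  show "{Node 0 []} \<subseteq> Tn 0" by (simp add: Tn_def lpt_def num_edges_def)
qed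

definition A :: "int \<Rightarrow> nat \<Rightarrow> ltree set" where
  "A \<sigma> n = {T \<in> Tn (Suc n). root_label (hd (children T)) = \<sigma>}"

lemma Tn_Suc_split: "Tn (Suc n) = A 1 n \<union> A (-1) n"
proof
  show "A 1 n \<union> A (-1) n \<subseteq> Tn (Suc n)" by (auto simp: A_def)
  show "Tn (Suc n) \<subseteq> A 1 n \<union> A (-1) n"
  proof
    fix T assume T: "T \<in> Tn (Suc n)"
    obtain a ts where Tt: "T = Node a ts" by (cases T)
    have "ts \<noteq> []" using T Tt by (auto simp: Tn_def num_edges_def)
    then obtain t ts' where ts: "ts = t # ts'" by (cases ts) auto
    have "\<bar>root_label t\<bar> = 1" using T Tt ts by (auto simp: Tn_def lpt_def)
    then have "root_label t = 1 \<or> root_label t = -1" by auto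
    then show "T \<in> A 1 n \<union> A (-1) n" using T Tt ts by (auto simp: A_def)
  qed
qed

lemma A_disj: "A 1 n \<inter> A (-1) n = {}"
  by (auto simp: A_def)

lemma fin_A: "finite (A \<sigma> n)"
  using fin_Tn[of "Suc n"] by (simp add: A_def)

definition Sg :: "nat \<Rightarrow> (nat \<times> ltree \<times> ltree) set" where
  "Sg n = Sigma {0..n} (\<lambda>i. Tn i \<times> Tn (n - i))"

definition ff :: "int \<Rightarrow> nat \<times> ltree \<times> ltree \<Rightarrow> ltree" where
  "ff \<sigma> x = Node 0 (shift \<sigma> (snd (snd x)) # children (fst (snd x)))"

definition gg :: "int \<Rightarrow> ltree \<Rightarrow> nat \<times> ltree \<times> ltree" where
  "gg \<sigma> T = (num_edges (Node 0 (tl (children T))),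
              (Node 0 (tl (children T)), shift (-\<sigma>) (hd (children T))))"

lemma bij_ff:
  assumes s: "\<sigma> = 1 \<or> \<sigma> = -1"
  shows "bij_betw (ff \<sigma>) (Sg n) (A \<sigma> n)"
proof (rule bij_betw_byWitness[where f'="gg \<sigma>"])
  show "\<forall>x\<in>Sg n. gg \<sigma> (ff \<sigma> x) = x"
  proof
    fix x assume x: "x \<in> Sg n"
    obtain i T' s' where xx: "x = (i, T', s')" by (cases x) auto
    have "lpt T'" "num_edges T' = i" using x xx by (auto simp: Sg_def Tn_def)
    then show "gg \<sigma> (ff \<sigma> x) = x" using xx lpt_node[of T']
      by (simp add: ff_def gg_def)
  qed
  show "\<forall>y\<in>A \<sigma> n. ff \<sigma> (gg \<sigma> y) = y"
  proof
    fix T assume T: "T \<in> A \<sigma> n"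
    obtain a ts where Tt: "T = Node a ts" by (cases T)
    have "ts \<noteq> []" using T Tt by (auto simp: A_def Tn_def num_edges_def)
    then obtain t ts' where ts: "ts = t # ts'" by (cases ts) auto
    show "ff \<sigma> (gg \<sigma> T) = T" using T Tt ts by (auto simp: A_def Tn_def lpt_def ff_def gg_def)
  qed
  show "ff \<sigma> ` Sg n \<subseteq> A \<sigma> n"
  proof
    fix y assume "y \<in> ff \<sigma> ` Sg n"
    then obtain x where x: "x \<in> Sg n" and y: "y = ff \<sigma> x" by auto
    obtain i T' s' where xx: "x = (i, T', s')" by (cases x) auto
    have h: "lpt T'" "num_edges T' = i" "lpt s'" "num_edges s' = n - i" "i \<le> n"
      using x xx by (auto simp: Sg_def Tn_def)
    have T'e: "T' = Node 0 (children T')" using lpt_node[OF h(1)] .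
    have adjT': "adj_ok (Node 0 (children T'))" using h(1) T'e by (metis lpt_def)
    have "num_edges (shift \<sigma> s') = num_edges s'" by (simp add: num_edges_def labels_shift)
    then have "num_edges y = Suc n"
      using y xx num_edges_cons[of 0 "shift \<sigma> s'" "children T'" 0] h T'e
      by (simp add: ff_def)
    moreover have "lpt y" using y xx h adjT' s by (auto simp: ff_def lpt_def)
    ultimately show "y \<in> A \<sigma> n" using y xx h by (simp add: A_def Tn_def ff_def lpt_def)
  qed
  show "gg \<sigma> ` A \<sigma> n \<subseteq> Sg n"
  proof
    fix x assume "x \<in> gg \<sigma> ` A \<sigma> n"
    then obtain T where T: "T \<in> A \<sigma> n" and x: "x = gg \<sigma> T" by auto
    obtain a ts where Tt: "T = Node a ts" by (cases T)
    have "ts \<noteq> []" using T Tt by (auto simp: A_def Tn_def num_edges_def)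
    then obtain t ts' where ts: "ts = t # ts'" by (cases ts) auto
    have a0: "a = 0" and adj: "adj_ok T" and rt: "root_label t = \<sigma>"
      and ne: "num_edges T = Suc n"
      using T Tt ts by (auto simp: A_def Tn_def lpt_def)
    have ne2: "Suc n = Suc (num_edges t + num_edges (Node 0 ts'))"
      using ne num_edges_cons[of a t ts' 0] Tt ts by simp
    have "num_edges (shift (-\<sigma>) t) = num_edges t" by (simp add: num_edges_def labels_shift)
    moreover have "lpt (shift (-\<sigma>) t)" using adj Tt ts rt by (simp add: lpt_def)
    moreover have "lpt (Node 0 ts')" using adj Tt ts a0 by (simp add: lpt_def)
    ultimately show "x \<in> Sg n" using x Tt ts ne2 by (auto simp: Sg_def Tn_def gg_def)
  qed
qed

lemma key:
  assumes s: "\<sigma> = 1 \<or> \<sigma> = -1"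
  shows "fps_nth (R j * R (j - \<sigma>)) n = (\<Sum>T\<in>A \<sigma> n. monom 1 (num_ge j T))"
proof -
  have "fps_nth (R j * R (j - \<sigma>)) n
      = (\<Sum>i=0..n. (\<Sum>T'\<in>Tn i. monom 1 (num_ge j T')) * (\<Sum>s'\<in>Tn (n - i). monom 1 (num_ge (j - \<sigma>) s')))"
    by (simp add: fps_mult_nth R_nth)
  also have "\<dots> = (\<Sum>i=0..n. (\<Sum>p\<in>Tn i \<times> Tn (n - i). monom 1 (num_ge j (fst p) + num_ge (j - \<sigma>) (snd p))))"
    by (simp add: sum_product sum.cartesian_product mult_monom split_def)
  also have "\<dots> = (\<Sum>x\<in>Sg n. monom 1 (num_ge j (fst (snd x)) + num_ge (j - \<sigma>) (snd (snd x))))"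
    unfolding Sg_def by (subst sum.Sigma) (auto simp: fin_Tn split_def)
  also have "\<dots> = (\<Sum>x\<in>Sg n. monom 1 (num_ge j (ff \<sigma> x)))"
  proof (rule sum.cong[OF refl])
    fix x assume x: "x \<in> Sg n"
    obtain i T' s' where xx: "x = (i, T', s')" by (cases x) auto
    have "lpt T'" using x xx by (auto simp: Sg_def Tn_def)
    then have "T' = Node 0 (children T')" by (rule lpt_node)
    then have "num_ge j T' = num_ge j (Node 0 (children T'))" by simp
    then show "monom 1 (num_ge j (fst (snd x)) + num_ge (j - \<sigma>) (snd (snd x))) = monom 1 (num_ge j (ff \<sigma> x))"
      using xx by (simp add: ff_def num_ge_cons num_ge_shift add.commute)
  qed
  also have "\<dots> = (\<Sum>T\<in>A \<sigma> n. monom 1 (num_ge j T))"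
    by (rule sum.reindex_bij_betw[OF bij_ff[OF s]])
  finally show ?thesis .
qed

lemma recR:
  assumes j: "j \<ge> 1"
  shows "R j = 1 + fps_X * R j * (R (j - 1) + R (j + 1))"
proof (rule fps_ext)
  fix n
  show "fps_nth (R j) n = fps_nth (1 + fps_X * R j * (R (j - 1) + R (j + 1))) n"
  proof (cases n)
    case 0
    have "num_ge j (Node 0 []) = 0" using j by (simp add: num_ge_def)
    then show ?thesis using 0 by (simp add: R_nth Tn0 mult.assoc)
  next
    case (Suc m)
    have "fps_nth (R j) n = (\<Sum>T\<in>A 1 m. monom 1 (num_ge j T)) + (\<Sum>T\<in>A (-1) m. monom 1 (num_ge j T))"
      unfolding R_nth Suc Tn_Suc_split by (rule sum.union_disjoint[OF fin_A fin_A A_disj])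
    also have "\<dots> = fps_nth (R j * R (j - 1)) m + fps_nth (R j * R (j - (-1))) m"
      using key[of 1 j m] key[of "-1" j m] by simp
    also have "\<dots> = fps_nth (1 + fps_X * R j * (R (j - 1) + R (j + 1))) n"
      using Suc by (simp add: mult.assoc distrib_left)
    finally show ?thesis .
  qed
qed

theorem lemma6:
  shows "(\<forall>j::int. j \<ge> 1 \<longrightarrow> R j = 1 + fps_X * R j * (R (j - 1) + R (j + 1)))
       \<and> dual_rel (R 0) (R 1)
       \<and> (\<forall>S :: nat \<Rightarrow> int poly fps.
            ((\<forall>j::nat. j \<ge> 1 \<longrightarrow> S j = 1 + fps_X * S j * (S (j - 1) + S (j + 1)))
             \<and> dual_rel (S 0) (S 1))
            \<longrightarrow> (\<forall>j::nat. S j = R (int j)))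
       \<and> (\<forall>j::int. dual_rel (R (- j)) (R (j + 1)))"
proof -
  have P1: "\<forall>j::int. j \<ge> 1 \<longrightarrow> R j = 1 + fps_X * R j * (R (j - 1) + R (j + 1))"
    using recR by blast
  have P4: "\<forall>j::int. dual_rel (R (- j)) (R (j + 1))" using dual_R by blast
  have P2: "dual_rel (R 0) (R 1)" using dual_R[of 0] by simp
  have P3: "\<forall>S :: nat \<Rightarrow> int poly fps.
            ((\<forall>j::nat. j \<ge> 1 \<longrightarrow> S j = 1 + fps_X * S j * (S (j - 1) + S (j + 1)))
             \<and> dual_rel (S 0) (S 1))
            \<longrightarrow> (\<forall>j::nat. S j = R (int j))"
  proof (intro allI impI)
    fix S :: "nat \<Rightarrow> int poly fps" and j :: nat
    assume H: "(\<forall>j::nat. j \<ge> 1 \<longrightarrow> S j = 1 + fps_X * S j * (S (j - 1) + S (j + 1)))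
             \<and> dual_rel (S 0) (S 1)"
    have recS: "\<And>j::nat. j \<ge> 1 \<Longrightarrow> S j = 1 + fps_X * S j * (S (j - 1) + S (j + 1))"
      using H by blast
    have dS: "dual_rel (S 0) (S 1)" using H by blast
    define Q where "Q j = R (int j)" for j
    have recQ: "Q j = 1 + fps_X * Q j * (Q (j - 1) + Q (j + 1))" if j: "j \<ge> 1" for j
    proof -
      have "int (j - 1) = int j - 1" using j by simp
      then show ?thesis using recR[of "int j"] j by (simp add: Q_def add.commute)
    qed
    have dQ: "dual_rel (Q 0) (Q 1)" using P2 by (simp add: Q_def)
    have expand: "fps_nth F m = (if m = 0 then 1 else
           (\<Sum>i=0..m-1. fps_nth G i * (fps_nth H1 (m - 1 - i) + fps_nth H2 (m - 1 - i))))"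
      if e: "F = 1 + fps_X * G * (H1 + H2)" for F G H1 H2 :: "int poly fps" and m
    proof -
      have "fps_nth F m = fps_nth (1 + fps_X * (G * (H1 + H2))) m"
        using e by (simp add: mult.assoc)
      also have "\<dots> = fps_nth 1 m + (if m = 0 then 0 else fps_nth (G * (H1 + H2)) (m - 1))"
        by (simp only: fps_add_nth fps_X_mult_nth)
      finally show ?thesis by (simp add: fps_mult_nth fps_add_nth distrib_left sum.distrib)
    qed
    have main: "\<forall>j. fps_nth (S j) n = fps_nth (Q j) n" for n
    proof (induction n rule: less_induct)
      case (less n)
      have pos: "fps_nth (S j) n = fps_nth (Q j) n" if j: "j \<ge> 1" for j
      proof (cases "n = 0")
        case True
        then show ?thesis using expand[OF recS[OF j]] expand[OF recQ[OF j]] by simp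
      next
        case False
        have "(\<Sum>i=0..n-1. fps_nth (S j) i * (fps_nth (S (j-1)) (n - 1 - i) + fps_nth (S (j+1)) (n - 1 - i)))
            = (\<Sum>i=0..n-1. fps_nth (Q j) i * (fps_nth (Q (j-1)) (n - 1 - i) + fps_nth (Q (j+1)) (n - 1 - i)))"
        proof (rule sum.cong[OF refl])
          fix i assume i: "i \<in> {0..n-1}"
          have "i < n" "n - 1 - i < n" using i False by auto
          then show "fps_nth (S j) i * (fps_nth (S (j-1)) (n - 1 - i) + fps_nth (S (j+1)) (n - 1 - i))
            = fps_nth (Q j) i * (fps_nth (Q (j-1)) (n - 1 - i) + fps_nth (Q (j+1)) (n - 1 - i))"
            using less.IH by metis
        qed
        then show ?thesis using expand[OF recS[OF j], of n] expand[OF recQ[OF j], of n] False by simp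
      qed
      have one: "fps_nth (S 1) n = fps_nth (Q 1) n" using pos by simp
      have zero: "fps_nth (S 0) n = fps_nth (Q 0) n"
      proof (rule poly_eqI)
        fix k
        show "coeff (fps_nth (S 0) n) k = coeff (fps_nth (Q 0) n) k"
          using dS dQ one unfolding dual_rel_def by simp
      qed
      show ?case
      proof
        fix j
        show "fps_nth (S j) n = fps_nth (Q j) n"
          using pos zero by (cases "j = 0") auto
      qed
    qed
    show "S j = R (int j)"
      using main unfolding Q_def[symmetric] by (intro fps_ext) blast
  qed
  show ?thesis using P1 P2 P3 P4 by blast
qed

end
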